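(* Let $G=(V,E)$ be a graph on $|V|=n$ vertices with minimum degree $\delta(G)>0$ and $|L(G;1/20)|\leq n/14$. Then $f_o(G)\geq n/61$.
   Context: For a graph $G=(V,E)$ and $\beta>0$, $L(G;\beta)$ is the set of vertices $v\in V$ for which there exists $u\in V$ with $uv\in E$ and $|N(u)\setminus N(v)|\geq \beta\,|N(u)\cup N(v)|$, where $N(x)$ is the neighborhood of $x$ in $G$. For a graph $G$, $f_o(G)$ denotes the maximum of $|V_0|$ over all $V_0\subseteq V(G)$ such that the induced subgraph $G[V_0]$ has all degrees odd. *)

theory Defs
  imports Complex_Main
begin

definition simple_graph :: "'a set \<Rightarrow> ('a \<Rightarrow> 'a \<Rightarrow> bool) \<Rightarrow> bool" where
  "simple_graph V adj \<longleftrightarrow> finite V \<and>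
     (\<forall>u v. adj u v \<longrightarrow> u \<in> V \<and> v \<in> V) \<and>
     (\<forall>u v. adj u v \<longrightarrow> adj v u) \<and>
     (\<forall>v. \<not> adj v v)"

definition nbhd :: "'a set \<Rightarrow> ('a \<Rightarrow> 'a \<Rightarrow> bool) \<Rightarrow> 'a \<Rightarrow> 'a set" where
  "nbhd V adj v = {u \<in> V. adj v u}"

definition min_degree :: "'a set \<Rightarrow> ('a \<Rightarrow> 'a \<Rightarrow> bool) \<Rightarrow> nat" where
  "min_degree V adj = Min ((\<lambda>v. card (nbhd V adj v)) ` V)"

definition L_set :: "'a set \<Rightarrow> ('a \<Rightarrow> 'a \<Rightarrow> bool) \<Rightarrow> real \<Rightarrow> 'a set" where
  "L_set V adj \<beta> = {v \<in> V. \<exists>u \<in> V. adj u v \<and>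
      real (card (nbhd V adj u - nbhd V adj v)) \<ge> \<beta> * real (card (nbhd V adj u \<union> nbhd V adj v))}"

definition odd_induced :: "'a set \<Rightarrow> ('a \<Rightarrow> 'a \<Rightarrow> bool) \<Rightarrow> 'a set \<Rightarrow> bool" where
  "odd_induced V adj V0 \<longleftrightarrow> V0 \<subseteq> V \<and> (\<forall>v \<in> V0. odd (card {u \<in> V0. adj v u}))"

definition f_o :: "'a set \<Rightarrow> ('a \<Rightarrow> 'a \<Rightarrow> bool) \<Rightarrow> nat" where
  "f_o V adj = Max (card ` {V0. odd_induced V adj V0})"

end

theory Submission
  imports Defs
begin


lemma card_filter_split:
  assumes "finite A"
  shows "card {y\<in>A. P y} + card {y\<in>A. \<not> P y} = card A"
proof -
  have "A = {y\<in>A. P y} \<union> {y\<in>A. \<not> P y}" by auto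
  moreover have "{y\<in>A. P y} \<inter> {y\<in>A. \<not> P y} = {}" by auto
  ultimately show ?thesis using assms card_Un_disjoint[of "{y\<in>A. P y}" "{y\<in>A. \<not> P y}"]
    by (metis (no_types, lifting) finite_Un)
qed

lemma card_if_sum:
  assumes "finite A"
  shows "card {x\<in>A. P x} = (\<Sum>x\<in>A. if P x then 1 else 0)"
  using assms by (simp add: sum.inter_filter[symmetric])

definition evenon :: "('a \<Rightarrow> 'a \<Rightarrow> bool) \<Rightarrow> 'a set \<Rightarrow> bool" where
  "evenon R B \<longleftrightarrow> (\<forall>x\<in>B. even (card {y\<in>B. R x y}))"

lemma toggle_key:
  assumes finD: "finite D" and irr: "\<And>x. \<not> R x x"
    and R'def: "R' = (\<lambda>x y. if x \<in> Nv \<and> y \<in> Nv \<and> x \<noteq> y then \<not> R x y else R x y)"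
    and x: "x \<in> Nv" "x \<in> D"
  shows "card {y\<in>D. R x y} + card {y\<in>D. R' x y} + 1 = 2 * card {y\<in>D - Nv. R x y} + card (Nv \<inter> D)"
proof -
  have e1: "{y\<in>D. R x y} = {y\<in>D - Nv. R x y} \<union> {y\<in>D \<inter> Nv - {x}. R x y}" using irr by auto
  have e2: "{y\<in>D. R' x y} = {y\<in>D - Nv. R x y} \<union> {y\<in>D \<inter> Nv - {x}. \<not> R x y}"
    using irr x by (auto simp: R'def)
  have c1: "card {y\<in>D. R x y} = card {y\<in>D - Nv. R x y} + card {y\<in>D \<inter> Nv - {x}. R x y}"
    unfolding e1 by (rule card_Un_disjoint) (use finD in auto)
  have c2: "card {y\<in>D. R' x y} = card {y\<in>D - Nv. R x y} + card {y\<in>D \<inter> Nv - {x}. \<not> R x y}"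
    unfolding e2 by (rule card_Un_disjoint) (use finD in auto)
  have c3: "card {y\<in>D \<inter> Nv - {x}. R x y} + card {y\<in>D \<inter> Nv - {x}. \<not> R x y} = card (D \<inter> Nv - {x})"
    by (rule card_filter_split) (use finD in auto)
  have c4: "card (D \<inter> Nv - {x}) + 1 = card (Nv \<inter> D)"
    using x finD by (metis Int_commute Int_iff card.remove finite_Int Suc_eq_plus1)
  show ?thesis using c1 c2 c3 c4 by linarith
qed

lemma gallai_step:
  assumes fin: "finite A'" and v: "v \<notin> A'"
    and sym: "\<And>x y. R x y \<Longrightarrow> R y x" and irr: "\<And>x. \<not> R x x"
    and R'def: "R' = (\<lambda>x y. if x \<in> Nv \<and> y \<in> Nv \<and> x \<noteq> y then \<not> R x y else R x y)"
    and Nv: "Nv = {y\<in>A'. R v y}"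
    and Nodd: "odd (card Nv)"
    and BC: "B \<union> C = A'" "B \<inter> C = {}"
    and eB: "evenon R' B" and eC: "evenon R' C"
    and Beven: "even (card (Nv \<inter> B))"
  shows "evenon R (insert v B) \<and> evenon R C"
proof -
  have finB: "finite B" and finC: "finite C" using fin BC by auto
  have "Nv = (Nv \<inter> B) \<union> (Nv \<inter> C)" using BC Nv by auto
  hence "card Nv = card (Nv \<inter> B) + card (Nv \<inter> C)"
    using finB finC BC by (metis card_Un_disjoint finite_Int Int_assoc Int_commute Int_empty_right Int_left_commute)
  hence Codd: "odd (card (Nv \<inter> C))" using Nodd Beven by auto
  have "evenon R C" unfolding evenon_def
  proof
    fix x assume xC: "x \<in> C"
    show "even (card {y\<in>C. R x y})"
    proof (cases "x \<in> Nv")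
      case True
      have "card {y\<in>C. R x y} + card {y\<in>C. R' x y} + 1 = 2 * card {y\<in>C - Nv. R x y} + card (Nv \<inter> C)"
        by (rule toggle_key[OF finC irr R'def True xC])
      moreover have "even (card {y\<in>C. R' x y})" using eC xC by (simp add: evenon_def)
      ultimately show ?thesis using Codd by presburger
    next
      case False
      hence "{y\<in>C. R x y} = {y\<in>C. R' x y}" by (auto simp: R'def)
      thus ?thesis using eC xC by (simp add: evenon_def)
    qed
  qed
  moreover have "evenon R (insert v B)" unfolding evenon_def
  proof
    fix x assume x: "x \<in> insert v B"
    show "even (card {y\<in>insert v B. R x y})"
    proof (cases "x = v")
      case True
      have "{y\<in>insert v B. R x y} = Nv \<inter> B" using True irr BC Nv by auto
      thus ?thesis using Beven by simp
    next
      case False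
      hence xB: "x \<in> B" using x by auto
      have vB: "v \<notin> B" using v BC by auto
      show ?thesis
      proof (cases "x \<in> Nv")
        case True
        have "card {y\<in>B. R x y} + card {y\<in>B. R' x y} + 1 = 2 * card {y\<in>B - Nv. R x y} + card (Nv \<inter> B)"
          by (rule toggle_key[OF finB irr R'def True xB])
        moreover have "even (card {y\<in>B. R' x y})" using eB xB by (simp add: evenon_def)
        moreover have "{y\<in>insert v B. R x y} = insert v {y\<in>B. R x y}" using True Nv sym by auto
        moreover have "card (insert v {y\<in>B. R x y}) = card {y\<in>B. R x y} + 1" using vB finB by simp
        ultimately show ?thesis using Beven by presburger
      next
        case False
        have "{y\<in>insert v B. R x y} = {y\<in>B. R' x y}" using False Nv sym xB BC by (auto simp: R'def)
        thus ?thesis using eB xB by (simp add: evenon_def)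
      qed
    qed
  qed
  ultimately show ?thesis by simp
qed

lemma gallai:
  assumes "finite A" "\<And>x y. R x y \<Longrightarrow> R y x" "\<And>x. \<not> R x x"
  shows "\<exists>B C. B \<union> C = A \<and> B \<inter> C = {} \<and> evenon R B \<and> evenon R C"
  using assms
proof (induction "card A" arbitrary: A R rule: less_induct)
  case less
  show ?case
  proof (cases "evenon R A")
    case True then show ?thesis by (intro exI[of _ A] exI[of _ "{}"]) (auto simp: evenon_def)
  next
    case False
    then obtain v where vA: "v \<in> A" and odd: "odd (card {y\<in>A. R v y})" unfolding evenon_def by auto
    define A' where "A' = A - {v}"
    define Nv where "Nv = {y\<in>A'. R v y}"
    define R' where "R' = (\<lambda>x y. if x \<in> Nv \<and> y \<in> Nv \<and> x \<noteq> y then \<not> R x y else R x y)"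
    have NvA: "{y\<in>A. R v y} = Nv" using less.prems(3) by (auto simp: Nv_def A'_def)
    have lt: "card A' < card A" unfolding A'_def by (rule card_Diff1_less[OF less.prems(1) vA])
    have finA': "finite A'" using less.prems(1) by (simp add: A'_def)
    have symR': "\<And>x y. R' x y \<Longrightarrow> R' y x" using less.prems(2) by (auto simp: R'_def)
    have irrR': "\<And>x. \<not> R' x x" using less.prems(3) by (auto simp: R'_def)
    obtain B C where BC: "B \<union> C = A'" "B \<inter> C = {}" "evenon R' B" "evenon R' C"
    proof -
      have "\<exists>B C. B \<union> C = A' \<and> B \<inter> C = {} \<and> evenon R' B \<and> evenon R' C"
        by (rule less.hyps[of A' R']) (use lt finA' symR' irrR' in auto)
      thus ?thesis using that by blast
    qed
    have vA': "v \<notin> A'" by (simp add: A'_def)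
    have Aeq: "A = insert v A'" using vA by (auto simp: A'_def)
    have oddN: "odd (card Nv)" using odd NvA by simp
    show ?thesis
    proof (cases "even (card (Nv \<inter> B))")
      case True
      have "evenon R (insert v B) \<and> evenon R C"
        by (rule gallai_step[OF finA' vA' less.prems(2,3) R'_def Nv_def oddN BC True])
      thus ?thesis using BC Aeq vA' by (intro exI[of _ "insert v B"] exI[of _ C]) auto
    next
      case False
      have "Nv = (Nv \<inter> B) \<union> (Nv \<inter> C)" using BC by (auto simp: Nv_def)
      hence "card Nv = card (Nv \<inter> B) + card (Nv \<inter> C)"
        using finA' BC by (metis card_Un_disjoint finite_Int finite_Un Int_assoc Int_commute Int_empty_right Int_left_commute)
      hence Ce: "even (card (Nv \<inter> C))" using oddN False by auto
      have BC': "C \<union> B = A'" "C \<inter> B = {}" using BC by auto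
      have "evenon R (insert v C) \<and> evenon R B"
        by (rule gallai_step[OF finA' vA' less.prems(2,3) R'_def Nv_def oddN BC' BC(4) BC(3) Ce])
      thus ?thesis using BC Aeq vA' by (intro exI[of _ B] exI[of _ "insert v C"]) auto
    qed
  qed
qed



lemma odd_piece_sub:
  assumes sg: "simple_graph V adj" and D: "D \<subseteq> nbhd V adj v"
    and ev: "evenon (\<lambda>x y. x \<noteq> y \<and> \<not> adj x y) D"
  shows "\<exists>W. W \<subseteq> insert v D \<and> card D \<le> card W \<and> (\<forall>w\<in>W. odd (card {u\<in>W. adj w u}))"
proof -
  have finV: "finite V" and sym: "\<And>x y. adj x y \<Longrightarrow> adj y x" and irr: "\<And>x. \<not> adj x x"
    using sg by (auto simp: simple_graph_def)
  have "D \<subseteq> V" using D by (auto simp: nbhd_def)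
  hence finD: "finite D" using finV by (rule finite_subset)
  have Dadj: "\<And>w. w \<in> D \<Longrightarrow> adj v w" using D by (auto simp: nbhd_def)
  have vD: "v \<notin> D" using Dadj irr by blast
  have cnt: "card {u\<in>D. adj w u} + card {u\<in>D. w \<noteq> u \<and> \<not> adj w u} + 1 = card D" if w: "w \<in> D" for w
  proof -
    have a: "{u\<in>D. adj w u} = {u\<in>D - {w}. adj w u}" using irr by auto
    have b: "{u\<in>D. w \<noteq> u \<and> \<not> adj w u} = {u\<in>D - {w}. \<not> adj w u}" by auto
    have "card {u\<in>D - {w}. adj w u} + card {u\<in>D - {w}. \<not> adj w u} = card (D - {w})"
      by (rule card_filter_split) (use finD in auto)
    moreover have "card (D - {w}) + 1 = card D" using w finD
      by (metis Suc_eq_plus1 card.remove)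
    ultimately show ?thesis using a b by simp
  qed
  have evw: "even (card {u\<in>D. w \<noteq> u \<and> \<not> adj w u})" if "w \<in> D" for w
    using ev that by (simp add: evenon_def)
  show ?thesis
  proof (cases "even (card D)")
    case True
    show ?thesis
    proof (intro exI[of _ D] conjI ballI)
      fix w assume w: "w \<in> D"
      show "odd (card {u\<in>D. adj w u})" using cnt[OF w] evw[OF w] True by presburger
    qed auto
  next
    case False
    show ?thesis
    proof (intro exI[of _ "insert v D"] conjI ballI)
      show "card D \<le> card (insert v D)" using finD by (simp add: card_insert_le)
      fix w assume w: "w \<in> insert v D"
      show "odd (card {u\<in>insert v D. adj w u})"
      proof (cases "w = v")
        case True
        have "{u\<in>insert v D. adj w u} = D" using True irr Dadj by auto
        thus ?thesis using False by simp
      next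
        case f: False
        hence wD: "w \<in> D" using w by auto
        have "{u\<in>insert v D. adj w u} = insert v {u\<in>D. adj w u}" using wD Dadj sym by auto
        moreover have "card (insert v {u\<in>D. adj w u}) = card {u\<in>D. adj w u} + 1" using vD finD by simp
        ultimately show ?thesis using cnt[OF wD] evw[OF wD] False by presburger
      qed
    qed auto
  qed
qed

lemma odd_piece:
  assumes sg: "simple_graph V adj" and A: "A \<subseteq> nbhd V adj v"
  shows "\<exists>W. W \<subseteq> insert v A \<and> card A \<le> 2 * card W \<and> (\<forall>w\<in>W. odd (card {u\<in>W. adj w u}))"
proof -
  have finV: "finite V" using sg by (auto simp: simple_graph_def)
  have "A \<subseteq> V" using A by (auto simp: nbhd_def)
  hence finA: "finite A" using finV by (rule finite_subset)
  obtain B C where BC: "B \<union> C = A" "B \<inter> C = {}" "evenon (\<lambda>x y. x \<noteq> y \<and> \<not> adj x y) B"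
      "evenon (\<lambda>x y. x \<noteq> y \<and> \<not> adj x y) C"
  proof -
    have "\<exists>B C. B \<union> C = A \<and> B \<inter> C = {} \<and> evenon (\<lambda>x y. x \<noteq> y \<and> \<not> adj x y) B \<and> evenon (\<lambda>x y. x \<noteq> y \<and> \<not> adj x y) C"
      by (rule gallai) (use finA sg in \<open>auto simp: simple_graph_def\<close>)
    thus ?thesis using that by blast
  qed
  have cA: "card A = card B + card C" using BC finA card_Un_disjoint[of B C] by auto
  show ?thesis
  proof (cases "card C \<le> card B")
    case True
    obtain W where W: "W \<subseteq> insert v B" "card B \<le> card W" "\<forall>w\<in>W. odd (card {u\<in>W. adj w u})"
    proof -
      have "B \<subseteq> nbhd V adj v" using A BC(1) by auto
      from odd_piece_sub[OF sg this BC(3)] show ?thesis using that by blast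
    qed
    show ?thesis using W True cA BC(1) by (intro exI[of _ W]) auto
  next
    case False
    obtain W where W: "W \<subseteq> insert v C" "card C \<le> card W" "\<forall>w\<in>W. odd (card {u\<in>W. adj w u})"
    proof -
      have "C \<subseteq> nbhd V adj v" using A BC(1) by auto
      from odd_piece_sub[OF sg this BC(4)] show ?thesis using that by blast
    qed
    show ?thesis using W False cA BC(1) by (intro exI[of _ W]) auto
  qed
qed



theorem lemma2p5:
  fixes V :: "'a set" and adj :: "'a \<Rightarrow> 'a \<Rightarrow> bool"
  assumes "simple_graph V adj"
    and "V \<noteq> {}"
    and "min_degree V adj > 0"
    and "real (card (L_set V adj (1/20))) \<le> real (card V) / 14"
  shows "real (f_o V adj) \<ge> real (card V) / 61"
proof -
  define N where "N = nbhd V adj"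
  define d where "d = (\<lambda>v. card (N v))"
  define L where "L = L_set V adj (1/20)"
  define S where "S = V - L"
  have finV: "finite V" and adjV: "\<And>u v. adj u v \<Longrightarrow> u \<in> V \<and> v \<in> V"
    and sym: "\<And>u v. adj u v \<Longrightarrow> adj v u" and irr: "\<And>v. \<not> adj v v"
    using assms(1) by (auto simp: simple_graph_def)
  have inN: "\<And>u v. u \<in> N v \<longleftrightarrow> adj v u" using adjV by (auto simp: N_def nbhd_def)
  have NV: "\<And>v. N v \<subseteq> V" by (auto simp: N_def nbhd_def)
  have finN: "\<And>v. finite (N v)" using NV finV finite_subset by blast
  have LV: "L \<subseteq> V" by (auto simp: L_def L_set_def)
  have finL: "finite L" using LV finV finite_subset by blast
  have finS: "finite S" using finV by (simp add: S_def)
  have dpos: "\<And>v. v \<in> V \<Longrightarrow> 0 < d v"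
  proof -
    fix v assume "v \<in> V"
    hence "min_degree V adj \<le> card (nbhd V adj v)" unfolding min_degree_def using finV by (intro Min_le) auto
    thus "0 < d v" using assms(3) by (simp add: d_def N_def)
  qed
  have key: "\<And>z u. z \<in> S \<Longrightarrow> adj u z \<Longrightarrow> 19 * card (N u - N z) < d z"
  proof -
    fix z u assume z: "z \<in> S" and uz: "adj u z"
    have uV: "u \<in> V" using adjV uz by blast
    have h: "\<not> (real (card (N u - N z)) \<ge> 1/20 * real (card (N u \<union> N z)))"
      using z uz uV by (auto simp: S_def L_def L_set_def N_def)
    have "N u \<union> N z = (N u - N z) \<union> N z" by auto
    hence "card (N u \<union> N z) = card (N u - N z) + card (N z)"
      using finN card_Un_disjoint[of "N u - N z" "N z"] by auto
    hence "real (19 * card (N u - N z)) < real (d z)" using h unfolding d_def by simp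
    thus "19 * card (N u - N z) < d z" by (simp only: of_nat_less_iff)
  qed
  have degb: "\<And>z u. z \<in> S \<Longrightarrow> adj u z \<Longrightarrow> 19 * d u < 20 * d z"
  proof -
    fix z u assume z: "z \<in> S" and uz: "adj u z"
    have "d u \<le> card (N z \<union> (N u - N z))" unfolding d_def by (rule card_mono) (auto simp: finN)
    also have "\<dots> \<le> d z + card (N u - N z)" unfolding d_def by (rule card_Un_le)
    finally show "19 * d u < 20 * d z" using key[OF z uz] by linarith
  qed
  define Rel where "Rel = (\<lambda>a b. a = b \<or> adj a b)"
  have st1: "\<And>a b. a \<in> S \<Longrightarrow> b \<in> S \<Longrightarrow> Rel a b \<Longrightarrow> 19 * card (N a - N b) \<le> d b"
    using key unfolding Rel_def by fastforce
  have st2: "\<And>a b. a \<in> S \<Longrightarrow> b \<in> S \<Longrightarrow> Rel a b \<Longrightarrow> 19 * d b \<le> 20 * d a"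
    using degb sym unfolding Rel_def by fastforce
  have tri: "\<And>a b c. card (N a - N c) \<le> card (N a - N b) + card (N b - N c)"
  proof -
    fix a b c
    have "card (N a - N c) \<le> card ((N a - N b) \<union> (N b - N c))" by (rule card_mono) (auto simp: finN)
    also have "\<dots> \<le> card (N a - N b) + card (N b - N c)" by (rule card_Un_le)
    finally show "card (N a - N c) \<le> card (N a - N b) + card (N b - N c)" .
  qed
  define reach where "reach = (\<lambda>p x. \<exists>a b. a \<in> S \<and> b \<in> S \<and> Rel p a \<and> Rel a b \<and> Rel b x)"
  have reach_sym: "\<And>p x. reach p x \<Longrightarrow> reach x p"
    unfolding reach_def Rel_def using sym by blast
  have overlap: "\<And>p x. p \<in> S \<Longrightarrow> x \<in> S \<Longrightarrow> reach p x \<Longrightarrow> d p \<le> 2 * card (N p \<inter> N x)"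
  proof -
    fix p x assume p: "p \<in> S" and x: "x \<in> S" and r: "reach p x"
    then obtain a b where ab: "a \<in> S" "b \<in> S" "Rel p a" "Rel a b" "Rel b x" unfolding reach_def by blast
    have c1: "19 * card (N p - N a) \<le> d a" using st1 p ab by blast
    have c2: "19 * card (N a - N b) \<le> d b" using st1 ab by blast
    have c3: "19 * card (N b - N x) \<le> d x" using st1 ab x by blast
    have e1: "19 * d a \<le> 20 * d p" using st2 p ab by blast
    have e2: "19 * d b \<le> 20 * d a" using st2 ab by blast
    have e3: "19 * d x \<le> 20 * d b" using st2 ab x by blast
    have t: "card (N p - N x) \<le> card (N p - N a) + card (N a - N b) + card (N b - N x)"
      using tri[of p x a] tri[of a x b] by linarith
    have "N p = (N p \<inter> N x) \<union> (N p - N x)" by auto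
    hence sp: "d p = card (N p \<inter> N x) + card (N p - N x)"
      unfolding d_def using finN card_Un_disjoint[of "N p \<inter> N x" "N p - N x"] by auto
    show "d p \<le> 2 * card (N p \<inter> N x)" using c1 c2 c3 e1 e2 e3 t sp by linarith
  qed
  have Xb: "\<And>p. p \<in> S \<Longrightarrow> card {x\<in>S. reach p x} \<le> 3 * d p"
  proof -
    fix p assume p: "p \<in> S"
    define X where "X = {x\<in>S. reach p x}"
    have finX: "finite X" using finS by (auto simp: X_def)
    have "card X * d p = (\<Sum>x\<in>X. d p)" by simp
    also have "\<dots> \<le> (\<Sum>x\<in>X. 2 * card (N p \<inter> N x))" by (rule sum_mono) (use overlap p in \<open>auto simp: X_def\<close>)
    also have "\<dots> = 2 * (\<Sum>x\<in>X. \<Sum>y\<in>N p. if adj x y then 1 else 0)"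
    proof -
      have "\<And>x. card (N p \<inter> N x) = (\<Sum>y\<in>N p. if adj x y then 1 else 0)"
      proof -
        fix x have "N p \<inter> N x = {y\<in>N p. adj x y}" using inN by auto
        thus "card (N p \<inter> N x) = (\<Sum>y\<in>N p. if adj x y then 1 else 0)" using card_if_sum[OF finN] by simp
      qed
      thus ?thesis by (simp add: sum_distrib_left)
    qed
    also have "\<dots> = 2 * (\<Sum>y\<in>N p. \<Sum>x\<in>X. if adj x y then 1 else 0)" using sum.swap[where A=X and B="N p" and g="\<lambda>x y. if adj x y then (1::nat) else 0"] by simp
    also have "\<dots> = 2 * (\<Sum>y\<in>N p. card {x\<in>X. adj x y})" using card_if_sum[OF finX] by simp
    also have "\<dots> \<le> 2 * (\<Sum>y\<in>N p. d y)"
    proof -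
      have "\<And>y. card {x\<in>X. adj x y} \<le> d y"
      proof - 
        fix y have "{x\<in>X. adj x y} \<subseteq> N y" using inN sym by auto
        thus "card {x\<in>X. adj x y} \<le> d y" unfolding d_def by (rule card_mono[OF finN]) 
      qed
      thus ?thesis by (simp add: sum_mono)
    qed
    finally have A: "card X * d p \<le> 2 * (\<Sum>y\<in>N p. d y)" .
    have "(\<Sum>y\<in>N p. 19 * d y) \<le> (\<Sum>y\<in>N p. 20 * d p)"
    proof (rule sum_mono)
      fix y assume "y \<in> N p"
      hence "adj y p" using inN sym by blast
      thus "19 * d y \<le> 20 * d p" using degb[OF p] by (simp add: less_imp_le)
    qed
    also have "\<dots> = 20 * d p * d p" by (simp add: d_def)
    finally have B: "19 * (\<Sum>y\<in>N p. d y) \<le> 20 * d p * d p" by (simp add: sum_distrib_left)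
    have "(19 * card X) * d p \<le> (40 * d p) * d p" using A B by linarith
    hence "19 * card X \<le> 40 * d p" using dpos p by (simp add: S_def mult_le_cancel2)
    thus "card {x\<in>S. reach p x} \<le> 3 * d p" unfolding X_def[symmetric] by linarith
  qed
  define Bad where "Bad = {x\<in>S. 2 * card (N x \<inter> S) < d x}"
  have SV: "S \<subseteq> V" by (auto simp: S_def)
  have splitd: "\<And>x. d x = card (N x \<inter> S) + card (N x \<inter> L)"
  proof -
    fix x
    have "N x = (N x \<inter> S) \<union> (N x \<inter> L)" using NV by (auto simp: S_def)
    moreover have "(N x \<inter> S) \<inter> (N x \<inter> L) = {}" by (auto simp: S_def)
    ultimately show "d x = card (N x \<inter> S) + card (N x \<inter> L)"
      unfolding d_def using finN card_Un_disjoint[of "N x \<inter> S" "N x \<inter> L"] by (metis finite_Int)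
  qed
  have badb: "19 * real (card Bad) \<le> 40 * real (card L)"
  proof -
    have finBad: "finite Bad" using finS by (simp add: Bad_def)
    have "real (card Bad) = (\<Sum>x\<in>Bad. 1)" by simp
    also have "\<dots> \<le> (\<Sum>x\<in>Bad. 2 * real (card (N x \<inter> L)) / real (d x))"
    proof (rule sum_mono)
      fix x assume x: "x \<in> Bad"
      hence dp: "0 < real (d x)" using dpos SV by (auto simp: Bad_def)
      have "d x < 2 * card (N x \<inter> L)" using x splitd[of x] by (auto simp: Bad_def)
      hence "real (d x) \<le> 2 * real (card (N x \<inter> L))" by linarith
      thus "1 \<le> 2 * real (card (N x \<inter> L)) / real (d x)" using dp by simp
    qed
    also have "\<dots> \<le> (\<Sum>x\<in>S. 2 * real (card (N x \<inter> L)) / real (d x))"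
      by (rule sum_mono2) (use finS in \<open>auto simp: Bad_def\<close>)
    also have "\<dots> = 2 * (\<Sum>x\<in>S. \<Sum>u\<in>L. if adj x u then 1 / real (d x) else 0)"
    proof -
      have "\<And>x. 2 * real (card (N x \<inter> L)) / real (d x) = 2 * (\<Sum>u\<in>L. if adj x u then 1 / real (d x) else 0)"
      proof -
        fix x
        have "N x \<inter> L = {u\<in>L. adj x u}" using inN by auto
        thus "2 * real (card (N x \<inter> L)) / real (d x) = 2 * (\<Sum>u\<in>L. if adj x u then 1 / real (d x) else 0)"
          using finL by (simp add: sum.inter_filter[symmetric])
      qed
      thus ?thesis by (simp add: sum_distrib_left)
    qed
    also have "\<dots> = 2 * (\<Sum>u\<in>L. \<Sum>x\<in>S. if adj x u then 1 / real (d x) else 0)"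
      using sum.swap[where A=S and B=L and g="\<lambda>x u. if adj x u then 1 / real (d x) else 0"] by simp
    also have "\<dots> \<le> 2 * (\<Sum>u\<in>L. \<Sum>x\<in>S. if adj x u then (20/19) / real (d u) else 0)"
    proof -
      have "(\<Sum>u\<in>L. \<Sum>x\<in>S. if adj x u then 1 / real (d x) else 0) \<le> (\<Sum>u\<in>L. \<Sum>x\<in>S. if adj x u then (20/19) / real (d u) else 0)"
      proof (intro sum_mono)
        fix u x assume u: "u \<in> L" and x: "x \<in> S"
        show "(if adj x u then 1 / real (d x) else 0) \<le> (if adj x u then (20/19) / real (d u) else 0)"
        proof (cases "adj x u")
          case True
          have "19 * d u < 20 * d x" using degb[OF x] sym True by blast
          hence h: "19 * real (d u) \<le> 20 * real (d x)" by linarith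
          have du: "0 < real (d u)" using dpos u LV by auto
          have dx: "0 < real (d x)" using dpos x SV by auto
          have "1 / real (d x) \<le> (20/19) / real (d u)" using h du dx by (simp add: field_simps)
          thus ?thesis using True by simp
        qed simp
      qed
      thus ?thesis by simp
    qed
    also have "\<dots> = 2 * (\<Sum>u\<in>L. real (card {x\<in>S. adj x u}) * ((20/19) / real (d u)))"
      using finS by (simp add: sum.inter_filter[symmetric])
    also have "\<dots> \<le> 2 * (\<Sum>u\<in>L. 20/19)"
    proof -
      have "(\<Sum>u\<in>L. real (card {x\<in>S. adj x u}) * ((20/19) / real (d u))) \<le> (\<Sum>u\<in>L. 20/19)"
      proof (rule sum_mono)
        fix u assume u: "u \<in> L"
        have du: "0 < real (d u)" using dpos u LV by auto
        have "{x\<in>S. adj x u} \<subseteq> N u" using inN sym by auto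
        hence "card {x\<in>S. adj x u} \<le> d u" unfolding d_def by (rule card_mono[OF finN])
        hence "real (card {x\<in>S. adj x u}) \<le> real (d u)" by linarith
        thus "real (card {x\<in>S. adj x u}) * ((20/19) / real (d u)) \<le> 20/19" using du by (simp add: field_simps)
      qed
      thus ?thesis by simp
    qed
    also have "\<dots> = 40/19 * real (card L)" by simp
    finally show ?thesis by simp
  qed
  define Good where "Good = S - Bad"
  have Goodd: "\<And>x. x \<in> Good \<Longrightarrow> x \<in> S \<and> d x \<le> 2 * card (N x \<inter> S)" by (auto simp: Good_def Bad_def)
  have finGood: "finite Good" using finS by (simp add: Good_def)
  have cS: "card S + card L = card V" unfolding S_def using LV finV
    by (metis card_Diff_subset card_mono finite_subset le_add_diff_inverse2)
  have cG: "card Good + card Bad = card S" unfolding Good_def using finS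
    by (metis (no_types, lifting) Bad_def card_Diff_subset card_mono finite_subset le_add_diff_inverse2 mem_Collect_eq subsetI)
  define far where "far = (\<lambda>P. \<forall>p\<in>P. \<forall>q\<in>P. p \<noteq> q \<longrightarrow> \<not> reach p q)"
  define F where "F = {P. P \<subseteq> Good \<and> far P}"
  have finF: "finite F" using finGood by (simp add: F_def)
  have "{} \<in> F" by (simp add: F_def far_def)
  then obtain P where P: "P \<in> F" "\<forall>Q\<in>F. P \<subseteq> Q \<longrightarrow> P = Q"
    using finite_has_maximal[OF finF] by blast
  have PG: "P \<subseteq> Good" and farP: "far P" using P(1) by (auto simp: F_def)
  have finP: "finite P" using PG finGood finite_subset by blast
  have cover: "Good \<subseteq> (\<Union>p\<in>P. {x\<in>S. reach p x})"
  proof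
    fix g assume g: "g \<in> Good"
    hence gS: "g \<in> S" using Goodd by blast
    show "g \<in> (\<Union>p\<in>P. {x\<in>S. reach p x})"
    proof (cases "g \<in> P")
      case True
      have "reach g g" unfolding reach_def Rel_def using gS by blast
      thus ?thesis using True gS by blast
    next
      case False
      have "insert g P \<notin> F" using P(2) False by blast
      hence "\<not> far (insert g P)" using PG g by (auto simp: F_def)
      then obtain q where "q \<in> P" "reach q g" using farP unfolding far_def using reach_sym by blast
      thus ?thesis using gS by blast
    qed
  qed
  have cGP: "card Good \<le> (\<Sum>p\<in>P. 3 * d p)"
  proof -
    have "card Good \<le> card (\<Union>p\<in>P. {x\<in>S. reach p x})" by (rule card_mono) (use finS finP cover in auto)
    also have "\<dots> \<le> (\<Sum>p\<in>P. card {x\<in>S. reach p x})" by (rule card_UN_le[OF finP])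
    also have "\<dots> \<le> (\<Sum>p\<in>P. 3 * d p)" by (rule sum_mono) (use Xb PG Goodd in blast)
    finally show ?thesis .
  qed
  have ex: "\<forall>p\<in>P. \<exists>W. W \<subseteq> insert p (N p \<inter> S) \<and> card (N p \<inter> S) \<le> 2 * card W \<and> (\<forall>w\<in>W. odd (card {u\<in>W. adj w u}))"
  proof
    fix p assume "p \<in> P"
    have "N p \<inter> S \<subseteq> nbhd V adj p" by (auto simp: N_def)
    from odd_piece[OF assms(1) this] show "\<exists>W. W \<subseteq> insert p (N p \<inter> S) \<and> card (N p \<inter> S) \<le> 2 * card W \<and> (\<forall>w\<in>W. odd (card {u\<in>W. adj w u}))" .
  qed
  from bchoice[OF ex] obtain Wf where Wf: "\<forall>p\<in>P. Wf p \<subseteq> insert p (N p \<inter> S) \<and> card (N p \<inter> S) \<le> 2 * card (Wf p) \<and> (\<forall>w\<in>Wf p. odd (card {u\<in>Wf p. adj w u}))"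
    by blast
  have WS: "\<And>p w. p \<in> P \<Longrightarrow> w \<in> Wf p \<Longrightarrow> w \<in> S \<and> Rel p w"
  proof -
    fix p w assume p: "p \<in> P" and w: "w \<in> Wf p"
    hence "w \<in> insert p (N p \<inter> S)" using Wf by blast
    moreover have "p \<in> S" using p PG Goodd by blast
    ultimately show "w \<in> S \<and> Rel p w" using inN by (auto simp: Rel_def)
  qed
  have finW: "\<And>p. p \<in> P \<Longrightarrow> finite (Wf p)"
    using Wf finN by (meson finite_Int finite_insert finite_subset)
  have sep: "\<And>p q w w'. p \<in> P \<Longrightarrow> q \<in> P \<Longrightarrow> p \<noteq> q \<Longrightarrow> w \<in> Wf p \<Longrightarrow> w' \<in> Wf q \<Longrightarrow> w \<noteq> w' \<and> \<not> adj w w'"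
  proof -
    fix p q w w' assume p: "p \<in> P" and q: "q \<in> P" and pq: "p \<noteq> q" and w: "w \<in> Wf p" and w': "w' \<in> Wf q"
    have a: "w \<in> S" "Rel p w" using WS[OF p w] by auto
    have b: "w' \<in> S" "Rel q w'" using WS[OF q w'] by auto
    have b': "Rel w' q" using b(2) sym by (auto simp: Rel_def)
    have nr: "\<not> reach p q" using farP p q pq by (auto simp: far_def)
    show "w \<noteq> w' \<and> \<not> adj w w'"
    proof (rule ccontr)
      assume "\<not> (w \<noteq> w' \<and> \<not> adj w w')"
      hence "Rel w w'" by (auto simp: Rel_def)
      hence "reach p q" unfolding reach_def using a b b' by blast
      thus False using nr by blast
    qed
  qed
  define U where "U = (\<Union>p\<in>P. Wf p)"
  have cardU: "card U = (\<Sum>p\<in>P. card (Wf p))" unfolding U_def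
  proof (rule card_UN_disjoint[OF finP])
    show "\<forall>i\<in>P. finite (Wf i)" using finW by blast
    show "\<forall>i\<in>P. \<forall>j\<in>P. i \<noteq> j \<longrightarrow> Wf i \<inter> Wf j = {}" using sep by blast
  qed
  have oddU: "odd_induced V adj U" unfolding odd_induced_def
  proof
    show "U \<subseteq> V" unfolding U_def using WS SV by blast
    show "\<forall>v\<in>U. odd (card {u\<in>U. adj v u})"
    proof
      fix w assume "w \<in> U"
      then obtain p where p: "p \<in> P" and w: "w \<in> Wf p" unfolding U_def by blast
      have "{u\<in>U. adj w u} = {u\<in>Wf p. adj w u}"
      proof
        show "{u\<in>U. adj w u} \<subseteq> {u\<in>Wf p. adj w u}"
        proof
          fix u assume "u \<in> {u\<in>U. adj w u}"
          then obtain q where q: "q \<in> P" "u \<in> Wf q" and wu: "adj w u" unfolding U_def by blast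
          have "q = p" using sep[OF p q(1) _ w q(2)] wu by blast
          thus "u \<in> {u\<in>Wf p. adj w u}" using q wu by blast
        qed
        show "{u\<in>Wf p. adj w u} \<subseteq> {u\<in>U. adj w u}" unfolding U_def using p by blast
      qed
      thus "odd (card {u\<in>U. adj w u})" using Wf p w by simp
    qed
  qed
  have "(\<Sum>p\<in>P. 3 * d p) \<le> (\<Sum>p\<in>P. 12 * card (Wf p))"
  proof (rule sum_mono)
    fix p assume p: "p \<in> P"
    have "d p \<le> 2 * card (N p \<inter> S)" using Goodd p PG by blast
    thus "3 * d p \<le> 12 * card (Wf p)" using Wf p by fastforce
  qed
  hence GU: "card Good \<le> 12 * card U" using cGP cardU by (simp add: sum_distrib_left)
  have "card U \<le> f_o V adj" unfolding f_o_def
  proof (rule Max_ge)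
    have "{V0. odd_induced V adj V0} \<subseteq> Pow V" by (auto simp: odd_induced_def)
    thus "finite (card ` {V0. odd_induced V adj V0})" using finV by (meson finite_Pow_iff finite_imageI finite_subset)
    show "card U \<in> card ` {V0. odd_induced V adj V0}" using oddU by blast
  qed
  hence fU: "real (card U) \<le> real (f_o V adj)" by linarith
  have L14: "real (card L) \<le> real (card V) / 14" using assms(4) by (simp add: L_def)
  have "real (card Good) \<le> 12 * real (card U)" using GU by linarith
  moreover have "real (card Good) + real (card Bad) + real (card L) = real (card V)"
    using cG cS by (metis of_nat_add)
  ultimately show ?thesis using badb L14 fU by linarith
qed

end
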